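(* Let $0<T\le1$, let $L$ be an invariant intrinsic location functional and $\mathbf X$ a periodic stationary process with period $1$. Then the càdlàg density $f^{\mathbf X}_{L,T}$ of $L(\mathbf X,[0,T])$ on $(0,T)$ satisfies $f^{\mathbf X}_{L,T}(t)\ge 1$ for all $t\in(0,T)$.
   Context: Let $H$ be a set of functions $\mathbb R\to\mathbb R$ with period $1$, invariant under shifts ($\theta_cg(x)=g(x+c)$), with the cylindrical $\sigma$-field; $\mathcal I$ is the set of compact intervals $[a,b]$, $a<b$. An intrinsic location functional is a map $L:H\times\mathcal I\to\mathbb R\cup\{\infty\}$ such that: (i) $L(\cdot,I)$ is measurable; (ii) $L(g,I)\in I\cup\{\infty\}$; (iii) $L(g,I)=L(\theta_cg,I-c)+c$ (with $\infty+c=\infty$); (iv) if $I_2\subseteq I_1$ and $L(g,I_1)\in I_2$ then $L(g,I_2)=L(g,I_1)$; (v) if $I_2\subseteq I_1$ and $L(g,I_2)\ne\infty$ then $L(g,I_1)\neq\infty$. It is called invariant if moreover $L(g,I)\ne\infty$ for all $g,I$, and $L(g,[0,1])=L(g,[a,a+1])\pmod 1$ for all $a\in\mathbb R$, $g\in H$. A periodic stationary process with period $1$ is a stationary process with continuous sample paths of period $1$ lying in $H$. The law of $L(\mathbf X,[0,T])$ restricted to $(0,T)$ is absolutely continuous with a càdlàg density $f^{\mathbf X}_{L,T}$. *)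

theory Defs
  imports "HOL-Probability.Probability"
begin

definition shift :: "real \<Rightarrow> (real \<Rightarrow> real) \<Rightarrow> (real \<Rightarrow> real)" where
  "shift c g = (\<lambda>x. g (x + c))"

definition periodic_shift_space :: "(real \<Rightarrow> real) set \<Rightarrow> bool" where
  "periodic_shift_space H \<longleftrightarrow>
     (\<forall>g\<in>H. \<forall>x. g (x + 1) = g x) \<and> (\<forall>g\<in>H. \<forall>c. shift c g \<in> H)"

definition cyl_space :: "(real \<Rightarrow> real) set \<Rightarrow> (real \<Rightarrow> real) measure" where
  "cyl_space H = restrict_space (Pi\<^sub>M UNIV (\<lambda>_. borel)) H"

text \<open>An intrinsic location functional.  The compact interval [a,b] (a < b) is
  represented by the pair of endpoints; the value infinity is the ereal PInfty.\<close>
definition intrinsic_location ::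
  "(real \<Rightarrow> real) set \<Rightarrow> ((real \<Rightarrow> real) \<Rightarrow> real \<Rightarrow> real \<Rightarrow> ereal) \<Rightarrow> bool" where
  "intrinsic_location H L \<longleftrightarrow>
     (\<forall>a b. a < b \<longrightarrow> (\<lambda>g. L g a b) \<in> borel_measurable (cyl_space H)) \<and>
     (\<forall>g\<in>H. \<forall>a b. a < b \<longrightarrow> L g a b \<in> ereal ` {a..b} \<union> {\<infinity>}) \<and>
     (\<forall>g\<in>H. \<forall>a b c. a < b \<longrightarrow> L g a b = L (shift c g) (a - c) (b - c) + ereal c) \<and>
     (\<forall>g\<in>H. \<forall>a1 b1 a2 b2. a1 < b1 \<longrightarrow> a2 < b2 \<longrightarrow> a1 \<le> a2 \<longrightarrow> b2 \<le> b1 \<longrightarrow>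
          L g a1 b1 \<in> ereal ` {a2..b2} \<longrightarrow> L g a2 b2 = L g a1 b1) \<and>
     (\<forall>g\<in>H. \<forall>a1 b1 a2 b2. a1 < b1 \<longrightarrow> a2 < b2 \<longrightarrow> a1 \<le> a2 \<longrightarrow> b2 \<le> b1 \<longrightarrow>
          L g a2 b2 \<noteq> \<infinity> \<longrightarrow> L g a1 b1 \<noteq> \<infinity>)"

definition invariant_intrinsic_location ::
  "(real \<Rightarrow> real) set \<Rightarrow> ((real \<Rightarrow> real) \<Rightarrow> real \<Rightarrow> real \<Rightarrow> ereal) \<Rightarrow> bool" where
  "invariant_intrinsic_location H L \<longleftrightarrow>
     intrinsic_location H L \<and>
     (\<forall>g\<in>H. \<forall>a b. a < b \<longrightarrow> L g a b \<noteq> \<infinity>) \<and>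
     (\<forall>g\<in>H. \<forall>a. real_of_ereal (L g 0 1) - real_of_ereal (L g a (a + 1)) \<in> \<int>)"

definition periodic_stationary_process ::
  "'w measure \<Rightarrow> (real \<Rightarrow> real) set \<Rightarrow> ('w \<Rightarrow> real \<Rightarrow> real) \<Rightarrow> bool" where
  "periodic_stationary_process M H X \<longleftrightarrow>
     prob_space M \<and>
     X \<in> measurable M (cyl_space H) \<and>
     (\<forall>\<omega>\<in>space M. continuous_on UNIV (X \<omega>) \<and> (\<forall>x. X \<omega> (x + 1) = X \<omega> x)) \<and>
     (\<forall>c. distr M (cyl_space H) (\<lambda>\<omega>. shift c (X \<omega>)) = distr M (cyl_space H) X)"

definition cadlag_on :: "real set \<Rightarrow> (real \<Rightarrow> real) \<Rightarrow> bool" where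
  "cadlag_on S f \<longleftrightarrow>
     (\<forall>t\<in>S. continuous (at_right t) f \<and> (\<exists>l. (f \<longlongrightarrow> l) (at_left t)))"

end

theory Submission
  imports Defs
begin

lemma floor_mod_shift:
  fixes x y :: real and z m :: int and n :: nat
  assumes "n > 0" "y = x - real_of_int m / real n + real_of_int z"
  shows "\<lfloor>real n * y\<rfloor> mod int n = (\<lfloor>real n * x\<rfloor> - m) mod int n"
proof -
  have "real n * y = real n * x + real_of_int (int n * z - m)"
    using assms by (simp add: field_simps)
  then have "\<lfloor>real n * y\<rfloor> = \<lfloor>real n * x\<rfloor> + (int n * z - m)"
    by (metis floor_add_int)
  then have "\<lfloor>real n * y\<rfloor> = (\<lfloor>real n * x\<rfloor> - m) + z * int n"
    by simp
  then show ?thesis by simp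
qed

lemma floor_mod_bin:
  fixes x :: real and n k :: nat
  assumes "0 \<le> x" "x \<le> 1" "1 \<le> k" "k < n"
    and "\<lfloor>real n * x\<rfloor> mod int n = int k"
  shows "real k / real n \<le> x \<and> x < (real k + 1) / real n"
proof -
  have n: "real n > 0" using assms by simp
  have f0: "0 \<le> \<lfloor>real n * x\<rfloor>" using assms by simp
  have f1: "\<lfloor>real n * x\<rfloor> \<le> int n"
  proof -
    have "real n * x \<le> real n" using assms by (simp add: mult_left_le)
    then have "\<lfloor>real n * x\<rfloor> \<le> \<lfloor>real n\<rfloor>" by (rule floor_mono)
    then show ?thesis by simp
  qed
  have "\<lfloor>real n * x\<rfloor> \<noteq> int n" using assms by auto
  then have "\<lfloor>real n * x\<rfloor> < int n" using f1 by simp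
  then have "\<lfloor>real n * x\<rfloor> = int k" using assms f0 by simp
  then have "real k \<le> real n * x \<and> real n * x < real k + 1"
    by (metis floor_eq_iff of_int_of_nat_eq)
  then show ?thesis using n by (simp add: field_simps)
qed

lemma il_parts:
  assumes "invariant_intrinsic_location H L"
  shows "\<forall>a b. a < b \<longrightarrow> (\<lambda>g. L g a b) \<in> borel_measurable (cyl_space H)"
    and "\<forall>g\<in>H. \<forall>a b. a < b \<longrightarrow> L g a b \<in> ereal ` {a..b} \<union> {\<infinity>}"
    and "\<forall>g\<in>H. \<forall>a b c. a < b \<longrightarrow> L g a b = L (shift c g) (a - c) (b - c) + ereal c"
    and "\<forall>g\<in>H. \<forall>a1 b1 a2 b2. a1 < b1 \<longrightarrow> a2 < b2 \<longrightarrow> a1 \<le> a2 \<longrightarrow> b2 \<le> b1 \<longrightarrow>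
          L g a1 b1 \<in> ereal ` {a2..b2} \<longrightarrow> L g a2 b2 = L g a1 b1"
    and "\<forall>g\<in>H. \<forall>a b. a < b \<longrightarrow> L g a b \<noteq> \<infinity>"
    and "\<forall>g\<in>H. \<forall>a. real_of_ereal (L g 0 1) - real_of_ereal (L g a (a + 1)) \<in> \<int>"
  using assms unfolding invariant_intrinsic_location_def intrinsic_location_def
  apply -
  apply (elim conjE, assumption)+
  done

lemma tau_facts:
  assumes "invariant_intrinsic_location H L" "g \<in> H"
  shows "L g 0 1 = ereal (real_of_ereal (L g 0 1)) \<and> 0 \<le> real_of_ereal (L g 0 1)
         \<and> real_of_ereal (L g 0 1) \<le> 1"
proof -
  note r1 = il_parts(2)[OF assms(1)] and r2 = il_parts(5)[OF assms(1)]
  have a: "L g 0 1 \<in> ereal ` {0..1} \<union> {\<infinity>}" "L g 0 1 \<noteq> \<infinity>"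
    using r1 r2 assms(2) by auto
  then obtain r where "L g 0 1 = ereal r" "r \<in> {0..1}" by auto
  then show ?thesis by simp
qed

lemma tau_shift:
  assumes "periodic_shift_space H" "invariant_intrinsic_location H L" "g \<in> H"
  shows "\<exists>z::int. real_of_ereal (L (shift c g) 0 1) = real_of_ereal (L g 0 1) - c + real_of_int z"
proof -
  have sg: "shift c g \<in> H" using assms(1,3) unfolding periodic_shift_space_def by blast
  note sh = il_parts(3)[OF assms(2)]
  have "L g c (c+1) = L (shift c g) (c - c) (c + 1 - c) + ereal c"
    using sh[rule_format, OF assms(3), of c "c+1" c] by simp
  also have "\<dots> = ereal (real_of_ereal (L (shift c g) 0 1)) + ereal c"
    using tau_facts[OF assms(2) sg] by simp
  finally have e: "real_of_ereal (L g c (c+1)) = real_of_ereal (L (shift c g) 0 1) + c" by simp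
  have "real_of_ereal (L g 0 1) - real_of_ereal (L g c (c + 1)) \<in> \<int>"
    using il_parts(6)[OF assms(2)] assms(3) by blast
  then obtain z' where "real_of_ereal (L g 0 1) - real_of_ereal (L g c (c + 1)) = real_of_int z'"
    by (auto elim: Ints_cases)
  then show ?thesis using e by (intro exI[of _ "-z'"]) simp
qed

lemma bin_shift:
  assumes "periodic_shift_space H" "invariant_intrinsic_location H L" "g \<in> H" "n > 0"
  shows "\<lfloor>real n * real_of_ereal (L (shift (real_of_int m / real n) g) 0 1)\<rfloor> mod int n
        = (\<lfloor>real n * real_of_ereal (L g 0 1)\<rfloor> - m) mod int n"
proof -
  obtain z where "real_of_ereal (L (shift (real_of_int m / real n) g) 0 1)
     = real_of_ereal (L g 0 1) - real_of_int m / real n + real_of_int z"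
    using tau_shift[OF assms(1-3)] by blast
  then show ?thesis by (rule floor_mod_shift[OF assms(4)])
qed

lemma mod_zero_iff_eq:
  fixes a k n :: int
  assumes "0 \<le> a" "a < n" "0 \<le> k" "k < n"
  shows "(a - k) mod n = 0 \<longleftrightarrow> a = k"
proof (cases "k \<le> a")
  case True
  then have "(a - k) mod n = a - k" using assms by (intro mod_pos_pos_trivial) auto
  then show ?thesis by simp
next
  case False
  have "(a - k) mod n = (a - k + n) mod n" by simp
  also have "\<dots> = a - k + n" using assms False by (intro mod_pos_pos_trivial) auto
  finally show ?thesis using False assms by simp
qed

lemma space_cyl: "space (cyl_space H) = H"
  by (simp add: cyl_space_def space_restrict_space space_PiM)

theorem mainTheorem6:
  fixes H :: "(real \<Rightarrow> real) set"
    and L :: "(real \<Rightarrow> real) \<Rightarrow> real \<Rightarrow> real \<Rightarrow> ereal"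
    and M :: "'w measure"
    and X :: "'w \<Rightarrow> real \<Rightarrow> real"
    and T :: real
    and f :: "real \<Rightarrow> real"
  assumes "periodic_shift_space H"
    and "invariant_intrinsic_location H L"
    and "periodic_stationary_process M H X"
    and "0 < T" and "T \<le> 1"
    and "cadlag_on {0<..<T} f"
    and "\<forall>A\<in>sets borel. A \<subseteq> {0<..<T} \<longrightarrow>
           emeasure M {\<omega>\<in>space M. L (X \<omega>) 0 T \<in> ereal ` A} = (\<integral>\<^sup>+x\<in>A. ennreal (f x) \<partial>lborel)"
  shows "\<forall>t\<in>{0<..<T}. f t \<ge> 1"
proof -
  note psp = assms(1) and inv = assms(2)
  have P: "prob_space M" and Xm: "X \<in> measurable M (cyl_space H)"
    and stat: "\<And>c. distr M (cyl_space H) (\<lambda>\<omega>. shift c (X \<omega>)) = distr M (cyl_space H) X"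
    using assms(3) unfolding periodic_stationary_process_def by blast+
  interpret prob_space M by (rule P)
  have XH: "\<And>\<omega>. \<omega> \<in> space M \<Longrightarrow> X \<omega> \<in> H"
    using measurable_space[OF Xm] by (simp add: space_cyl)
  have XP: "X \<in> measurable M (Pi\<^sub>M UNIV (\<lambda>_. borel))"
    using Xm unfolding cyl_space_def measurable_restrict_space2_iff by blast
  have Xc: "\<And>y. (\<lambda>\<omega>. X \<omega> y) \<in> borel_measurable M"
    using measurable_compose[OF XP measurable_component_singleton[of _ UNIV]] by simp
  have Xsm: "(\<lambda>\<omega>. shift c (X \<omega>)) \<in> measurable M (cyl_space H)" for c
  proof -
    have "(\<lambda>\<omega> x. X \<omega> (x + c)) \<in> measurable M (Pi\<^sub>M UNIV (\<lambda>_. borel))"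
      by (rule measurable_PiM_single') (auto intro: Xc)
    moreover have "(\<lambda>\<omega>. shift c (X \<omega>)) \<in> space M \<rightarrow> H"
      using psp XH unfolding periodic_shift_space_def by blast
    ultimately show ?thesis
      unfolding cyl_space_def measurable_restrict_space2_iff shift_def by simp
  qed
  have Lm: "(\<lambda>g. L g 0 1) \<in> borel_measurable (cyl_space H)"
    using il_parts(1)[OF inv] by simp
  define \<phi> where "\<phi> n g = \<lfloor>real n * real_of_ereal (L g 0 1)\<rfloor> mod int n" for n :: nat and g
  have \<phi>m: "\<phi> n \<in> measurable (cyl_space H) (count_space UNIV)" for n
    unfolding \<phi>_def by measurable (rule Lm)
  have Esets: "{g \<in> H. \<phi> n g = k} \<in> sets (cyl_space H)" for n k
  proof -
    have "{g \<in> space (cyl_space H). \<phi> n g = k} \<in> sets (cyl_space H)"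
      using \<phi>m by measurable
    then show ?thesis by (simp add: space_cyl)
  qed
  have shift_eq: "emeasure M {\<omega>\<in>space M. shift c (X \<omega>) \<in> E} = emeasure M {\<omega>\<in>space M. X \<omega> \<in> E}"
    if "E \<in> sets (cyl_space H)" for c E
  proof -
    have "emeasure M {\<omega>\<in>space M. shift c (X \<omega>) \<in> E}
        = emeasure (distr M (cyl_space H) (\<lambda>\<omega>. shift c (X \<omega>))) E"
      using that Xsm by (subst emeasure_distr) (auto simp: vimage_def Int_def conj_commute)
    also have "\<dots> = emeasure (distr M (cyl_space H) X) E" by (simp add: stat)
    also have "\<dots> = emeasure M {\<omega>\<in>space M. X \<omega> \<in> E}"
      using that Xm by (subst emeasure_distr) (auto simp: vimage_def Int_def conj_commute)
    finally show ?thesis .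
  qed
  define E where "E n k = {\<omega>\<in>space M. \<phi> n (X \<omega>) = int k}" for n k :: nat
  have Em: "E n k \<in> events" for n k
  proof -
    have "{\<omega>\<in>space M. X \<omega> \<in> {g \<in> H. \<phi> n g = int k}} \<in> events"
      using Esets Xm by measurable
    moreover have "{\<omega>\<in>space M. X \<omega> \<in> {g \<in> H. \<phi> n g = int k}} = E n k"
      using XH unfolding E_def by auto
    ultimately show ?thesis by simp
  qed
  have \<phi>range: "0 \<le> \<phi> n g \<and> \<phi> n g < int n" if "n > 0" for n g
    unfolding \<phi>_def using that by simp
  have Eeq: "prob (E n k) = prob (E n 0)" if n: "n > 0" and k: "k < n" for n k
  proof -
    let ?c = "real_of_int (int k) / real n"
    have "emeasure M (E n k) = emeasure M {\<omega>\<in>space M. shift ?c (X \<omega>) \<in> {g \<in> H. \<phi> n g = 0}}"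
    proof -
      have "{\<omega>\<in>space M. shift ?c (X \<omega>) \<in> {g \<in> H. \<phi> n g = 0}} = E n k"
      proof (intro set_eqI iffI)
        fix \<omega> assume a: "\<omega> \<in> {\<omega>\<in>space M. shift ?c (X \<omega>) \<in> {g \<in> H. \<phi> n g = 0}}"
        then have sp: "\<omega> \<in> space M" and "\<phi> n (shift ?c (X \<omega>)) = 0" by auto
        then have "(\<phi> n (X \<omega>) - int k) mod int n = 0"
          using bin_shift[OF psp inv XH[OF sp] n, of "int k"] unfolding \<phi>_def
          by (simp add: mod_diff_left_eq)
        then have "\<phi> n (X \<omega>) = int k"
          using mod_zero_iff_eq[of "\<phi> n (X \<omega>)" "int n" "int k"] \<phi>range[OF n] k by simp
        then show "\<omega> \<in> E n k" using sp unfolding E_def by simp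
      next
        fix \<omega> assume "\<omega> \<in> E n k"
        then have sp: "\<omega> \<in> space M" and e: "\<phi> n (X \<omega>) = int k" unfolding E_def by auto
        have sH: "shift ?c (X \<omega>) \<in> H" using psp XH[OF sp] unfolding periodic_shift_space_def by blast
        have "\<phi> n (shift ?c (X \<omega>)) = (\<phi> n (X \<omega>) - int k) mod int n"
          using bin_shift[OF psp inv XH[OF sp] n, of "int k"] unfolding \<phi>_def
          by (simp add: mod_diff_left_eq)
        then have "\<phi> n (shift ?c (X \<omega>)) = 0" using e by simp
        then show "\<omega> \<in> {\<omega>\<in>space M. shift ?c (X \<omega>) \<in> {g \<in> H. \<phi> n g = 0}}"
          using sp sH by simp
      qed
      then show ?thesis by simp
    qed
    also have "\<dots> = emeasure M {\<omega>\<in>space M. X \<omega> \<in> {g \<in> H. \<phi> n g = 0}}"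
      by (rule shift_eq[OF Esets])
    also have "\<dots> = emeasure M (E n 0)"
      using XH unfolding E_def by (intro arg_cong[where f="emeasure M"]) auto
    finally show ?thesis by (simp add: measure_def)
  qed
  have Eprob: "prob (E n k) = 1 / real n" if n: "n > 0" and k: "k < n" for n k
  proof -
    have un: "space M = (\<Union>j\<in>{..<n}. E n j)"
    proof (intro set_eqI iffI)
      fix \<omega> assume sp: "\<omega> \<in> space M"
      let ?j = "nat (\<phi> n (X \<omega>))"
      have "?j < n" "\<phi> n (X \<omega>) = int ?j" using \<phi>range[OF n, of "X \<omega>"] by (auto simp: nat_less_iff)
      then have "\<omega> \<in> E n ?j" using sp unfolding E_def by simp
      then show "\<omega> \<in> (\<Union>j\<in>{..<n}. E n j)" using \<open>?j < n\<close> by blast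
    qed (auto simp: E_def)
    have "1 = prob (\<Union>j\<in>{..<n}. E n j)" using un prob_space by simp
    also have "\<dots> = (\<Sum>j\<in>{..<n}. prob (E n j))"
    proof (rule finite_measure_finite_Union)
      show "E n ` {..<n} \<subseteq> events" using Em by blast
      show "disjoint_family_on (E n) {..<n}" by (auto simp: disjoint_family_on_def E_def)
    qed simp
    also have "\<dots> = (\<Sum>j\<in>{..<n}. prob (E n 0))" by (rule sum.cong[OF refl], rule Eeq[OF n], simp)
    also have "\<dots> = real n * prob (E n 0)" by (simp only: sum_constant card_lessThan)
    finally have "prob (E n 0) = 1 / real n" using n by (simp add: field_simps)
    then show ?thesis using Eeq[OF n k] by simp
  qed
  show ?thesis
  proof (rule ccontr)
    assume "\<not> ?thesis"
    then obtain t where t: "0 < t" "t < T" and ft: "f t < 1" by (auto simp: not_le)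
    define c where "c = (max (f t) 0 + 1) / 2"
    have c: "0 < c" "c < 1" "f t < c" using ft unfolding c_def by auto
    have "continuous (at_right t) f" using assms(6) t unfolding cadlag_on_def by auto
    then have "(f \<longlongrightarrow> f t) (at_right t)"
      by (simp add: continuous_within)
    then have "eventually (\<lambda>x. f x < c) (at_right t)"
      using c(3) by (rule order_tendstoD(2))
    then obtain b where b: "b > t" "\<And>y. t < y \<Longrightarrow> y < b \<Longrightarrow> f y < c"
      by (auto simp: eventually_at_right_field)
    define \<delta> where "\<delta> = min (b - t) (T - t)"
    have \<delta>: "\<delta> > 0" using b t unfolding \<delta>_def by auto
    obtain n :: nat where nbig: "2 / \<delta> < real n" using reals_Archimedean2 by blast
    have npos: "n > 0" using nbig \<delta>
      by (metis divide_pos_pos not_gr0 of_nat_0 order_less_asym zero_less_numeral)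
    have nd: "2 / real n < \<delta>" using nbig \<delta> npos by (simp add: field_simps)
    define k where "k = nat \<lceil>t * real n\<rceil>"
    have tn: "t * real n > 0" using t npos by simp
    have c0: "0 \<le> \<lceil>t * real n\<rceil>" using tn by simp
    have rk: "real k = real_of_int \<lceil>t * real n\<rceil>" unfolding k_def using c0 by simp
    have kge: "real k \<ge> t * real n" using rk ceiling_correct[of "t * real n"] by linarith
    have klt: "real k < t * real n + 1" using rk ceiling_correct[of "t * real n"] by linarith
    have k1: "1 \<le> k"
    proof -
      have "real k > 0" using kge tn by linarith
      then show ?thesis by simp
    qed
    define A where "A = {real k / real n ..< (real k + 1) / real n}"
    have tle: "t \<le> real k / real n" using kge npos by (simp add: field_simps)
    have up: "(real k + 1) / real n < t + \<delta>"
    proof -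
      have "(real k + 1) / real n < (t * real n + 2) / real n"
        using klt npos by (simp add: divide_strict_right_mono)
      also have "\<dots> = t + 2 / real n" using npos by (simp add: field_simps)
      finally show ?thesis using nd by simp
    qed
    have upT: "(real k + 1) / real n < T" using up unfolding \<delta>_def by simp
    have kn: "k < n"
    proof -
      have "(real k + 1) / real n < 1" using upT assms(5) by simp
      then have "real k + 1 < real n" using npos by (simp add: field_simps)
      then show ?thesis by simp
    qed
    have AsubT: "A \<subseteq> {0<..<T}" unfolding A_def using t tle upT by auto
    have Asets: "A \<in> sets borel" unfolding A_def by simp
    have fA: "\<And>x. x \<in> A \<Longrightarrow> f x < c"
    proof -
      fix x assume "x \<in> A"
      then have "t \<le> x" "x < t + \<delta>" using tle up unfolding A_def by auto
      then show "f x < c" using b c(3) unfolding \<delta>_def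
        by (cases "x = t") auto
    qed
    have sub: "E n k \<subseteq> {\<omega>\<in>space M. L (X \<omega>) 0 T \<in> ereal ` A}"
    proof
      fix \<omega> assume "\<omega> \<in> E n k"
      then have sp: "\<omega> \<in> space M" and e: "\<phi> n (X \<omega>) = int k" unfolding E_def by auto
      let ?g = "X \<omega>"
      let ?r = "real_of_ereal (L ?g 0 1)"
      have tf: "L ?g 0 1 = ereal ?r" "0 \<le> ?r" "?r \<le> 1" using tau_facts[OF inv XH[OF sp]] by auto
      have "real k / real n \<le> ?r \<and> ?r < (real k + 1) / real n"
        using floor_mod_bin[OF tf(2,3) k1 kn] e unfolding \<phi>_def by simp
      then have rA: "?r \<in> A" unfolding A_def by simp
      then have "?r \<in> {0..T}" using AsubT by auto
      then have "L ?g 0 1 \<in> ereal ` {0..T}" using tf(1) by auto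
      then have "L ?g 0 T = L ?g 0 1"
        using il_parts(4)[OF inv] XH[OF sp] assms(4,5)
        by (metis (no_types, lifting) le_less_trans order.refl zero_less_one)
      then show "\<omega> \<in> {\<omega>\<in>space M. L (X \<omega>) 0 T \<in> ereal ` A}" using sp rA tf(1) by auto
    qed
    have "ennreal (1 / real n) = emeasure M (E n k)"
      using Eprob[OF npos kn] by (simp add: emeasure_eq_measure Em)
    also have "\<dots> \<le> emeasure M {\<omega>\<in>space M. L (X \<omega>) 0 T \<in> ereal ` A}"
    proof (rule emeasure_mono[OF sub])
      have LTm: "(\<lambda>g. L g 0 T) \<in> borel_measurable (cyl_space H)"
        using il_parts(1)[OF inv] assms(4) by simp
      have LXm: "(\<lambda>\<omega>. L (X \<omega>) 0 T) \<in> borel_measurable M"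
        using measurable_compose[OF Xm LTm] by simp
      have eA: "\<And>z. z \<in> ereal ` A \<longleftrightarrow> ereal (real k / real n) \<le> z \<and> z < ereal ((real k + 1) / real n)"
      proof -
        fix z :: ereal
        show "z \<in> ereal ` A \<longleftrightarrow> ereal (real k / real n) \<le> z \<and> z < ereal ((real k + 1) / real n)"
          unfolding A_def by (cases z) auto
      qed
      have "{\<omega>\<in>space M. ereal (real k / real n) \<le> L (X \<omega>) 0 T \<and> L (X \<omega>) 0 T < ereal ((real k + 1) / real n)} \<in> events"
        using LXm by measurable
      then show "{\<omega>\<in>space M. L (X \<omega>) 0 T \<in> ereal ` A} \<in> events" by (simp only: eA)
    qed
    also have "\<dots> = (\<integral>\<^sup>+x\<in>A. ennreal (f x) \<partial>lborel)"
      using assms(7) Asets AsubT by blast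
    also have "\<dots> \<le> (\<integral>\<^sup>+x. ennreal c * indicator A x \<partial>lborel)"
      by (rule nn_integral_mono) (auto simp: indicator_def intro!: ennreal_leI dest!: fA)
    also have "\<dots> = ennreal c * emeasure lborel A"
      using Asets by (simp add: nn_integral_cmult_indicator)
    also have "\<dots> = ennreal c * ennreal (1 / real n)"
      unfolding A_def using npos by (simp add: field_simps diff_divide_distrib[symmetric])
    also have "\<dots> = ennreal (c / real n)" using c by (simp add: ennreal_mult[symmetric])
    finally have "1 / real n \<le> c / real n"
      using c npos by (simp add: ennreal_le_iff)
    then show False using c npos by (simp add: field_simps)
  qed
qed

end
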